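(* If $F_1$ and $F_2$ are forests with $X_{F_1}=X_{F_2}$, then $F_1$ and $F_2$ have the same number of leaves. That is, the number of leaves of a forest is determined by its chromatic symmetric function.
   Context: For a graph $G=(V,E)$ with $V=\{v_1,\dots,v_n\}$, a proper coloring is a map $\kappa:V\to\mathbb{N}$ with $\kappa(u)\ne\kappa(v)$ whenever $(u,v)\in E$. The chromatic symmetric function is $X_G=\sum_\kappa x_{\kappa(v_1)}\cdots x_{\kappa(v_n)}$, summed over proper colorings. A leaf is a vertex of degree exactly $1$. *)

theory Defs
  imports "HOL-Library.FuncSet"
begin

definition simple_graph :: "'a set \<Rightarrow> 'a set set \<Rightarrow> bool" where
  "simple_graph V E \<longleftrightarrow> finite V \<and>
     (\<forall>e\<in>E. \<exists>u v. u \<in> V \<and> v \<in> V \<and> u \<noteq> v \<and> e = {u, v})"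

definition is_cycle :: "'a set set \<Rightarrow> 'a list \<Rightarrow> bool" where
  "is_cycle E vs \<longleftrightarrow> length vs \<ge> 3 \<and> distinct vs \<and>
     (\<forall>i < length vs. {vs ! i, vs ! ((i + 1) mod length vs)} \<in> E)"

definition forest :: "'a set \<Rightarrow> 'a set set \<Rightarrow> bool" where
  "forest V E \<longleftrightarrow> simple_graph V E \<and> \<not> (\<exists>vs. is_cycle E vs)"

definition degree :: "'a set set \<Rightarrow> 'a \<Rightarrow> nat" where
  "degree E v = card {u. {u, v} \<in> E}"

definition leaves :: "'a set \<Rightarrow> 'a set set \<Rightarrow> 'a set" where
  "leaves V E = {v \<in> V. degree E v = 1}"

definition proper_coloring :: "'a set \<Rightarrow> 'a set set \<Rightarrow> ('a \<Rightarrow> nat) \<Rightarrow> bool" where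
  "proper_coloring V E \<kappa> \<longleftrightarrow> \<kappa> \<in> V \<rightarrow>\<^sub>E UNIV \<and>
     (\<forall>u v. {u, v} \<in> E \<and> u \<noteq> v \<longrightarrow> \<kappa> u \<noteq> \<kappa> v)"

text \<open>The chromatic symmetric function X_G, represented by its coefficients:
  the coefficient of the monomial \<Prod>i. x_i^(\<alpha> i) is the number of proper
  colorings \<kappa> with exactly \<alpha> i vertices of color i, for every i.
  Two formal power series are equal iff all coefficients agree.\<close>

definition csf :: "'a set \<Rightarrow> 'a set set \<Rightarrow> (nat \<Rightarrow> nat) \<Rightarrow> nat" where
  "csf V E \<alpha> = card {\<kappa>. proper_coloring V E \<kappa> \<and>
                         (\<forall>i. card {v \<in> V. \<kappa> v = i} = \<alpha> i)}"

end

theory Submission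
  imports Defs "HOL-Library.Multiset" "HOL-Library.Transitive_Closure_Table"
begin


definition W :: "'c set \<Rightarrow> ('c \<Rightarrow> nat) \<Rightarrow> (nat \<Rightarrow> nat) \<Rightarrow> nat" where
  "W A w \<alpha> = card {h \<in> A \<rightarrow>\<^sub>E (UNIV::nat set). \<forall>i. (\<Sum>a\<in>{a\<in>A. h a = i}. w a) = \<alpha> i}"

lemma W_count_transfer:
  assumes bij: "bij_betw f A B" and ww: "\<forall>a\<in>A. w' (f a) = w a"
  shows "(\<Sum>a\<in>{a\<in>A. g (f a) = i}. w a) = (\<Sum>b\<in>{b\<in>B. g b = i}. w' b)"
proof -
  have inj: "inj_on f A" and im: "f ` A = B" using bij by (auto simp: bij_betw_def)
  have "{b\<in>B. g b = i} = f ` {a\<in>A. g (f a) = i}" using im by auto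
  moreover have "inj_on f {a\<in>A. g (f a) = i}" using inj by (auto intro: inj_on_subset)
  ultimately have "(\<Sum>b\<in>{b\<in>B. g b = i}. w' b) = (\<Sum>a\<in>{a\<in>A. g (f a) = i}. w' (f a))"
    by (simp add: sum.reindex)
  also have "\<dots> = (\<Sum>a\<in>{a\<in>A. g (f a) = i}. w a)" using ww by (intro sum.cong) auto
  finally show ?thesis by simp
qed

lemma W_bij:
  assumes bij: "bij_betw f A B" and ww: "\<forall>a\<in>A. w' (f a) = w a"
  shows "W A w \<alpha> = W B w' \<alpha>"
proof -
  define G where "G = {g \<in> B \<rightarrow>\<^sub>E (UNIV::nat set). \<forall>i. (\<Sum>b\<in>{b\<in>B. g b = i}. w' b) = \<alpha> i}"
  define H where "H = {h \<in> A \<rightarrow>\<^sub>E (UNIV::nat set). \<forall>i. (\<Sum>a\<in>{a\<in>A. h a = i}. w a) = \<alpha> i}"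
  define \<Gamma> where "\<Gamma> = (\<lambda>g::_\<Rightarrow>nat. restrict (g \<circ> f) A)"
  have inj: "inj_on f A" and im: "f ` A = B" using bij by (auto simp: bij_betw_def)
  have cnt: "(\<Sum>a\<in>{a\<in>A. \<Gamma> g a = i}. w a) = (\<Sum>b\<in>{b\<in>B. g b = i}. w' b)" for g i
  proof -
    have "{a\<in>A. \<Gamma> g a = i} = {a\<in>A. g (f a) = i}" by (auto simp: \<Gamma>_def)
    then show ?thesis using W_count_transfer[OF bij ww] by simp
  qed
  have "bij_betw \<Gamma> G H"
  proof (rule bij_betwI')
    fix x y assume "x \<in> G" "y \<in> G"
    show "(\<Gamma> x = \<Gamma> y) = (x = y)"
    proof
      assume e: "\<Gamma> x = \<Gamma> y"
      show "x = y"
      proof (rule extensionalityI[of _ B])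
        show "x \<in> extensional B" "y \<in> extensional B" using \<open>x\<in>G\<close> \<open>y\<in>G\<close> by (auto simp: G_def PiE_iff)
        fix b assume "b \<in> B"
        then obtain a where "a \<in> A" "b = f a" using im by auto
        then show "x b = y b" using fun_cong[OF e, of a] by (simp add: \<Gamma>_def)
      qed
    qed simp
  next
    fix x assume "x \<in> G" then show "\<Gamma> x \<in> H" using cnt by (auto simp: G_def H_def \<Gamma>_def)
  next
    fix h assume h: "h \<in> H"
    define g where "g = restrict (h \<circ> inv_into A f) B"
    have "\<Gamma> g = h"
    proof (rule extensionalityI[of _ A])
      show "\<Gamma> g \<in> extensional A" by (simp add: \<Gamma>_def)
      show "h \<in> extensional A" using h by (auto simp: H_def PiE_iff)
      fix a assume "a \<in> A" then show "\<Gamma> g a = h a" using inj im by (auto simp: \<Gamma>_def g_def)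
    qed
    moreover have "g \<in> G" using h cnt[of g] \<open>\<Gamma> g = h\<close> by (auto simp: G_def H_def g_def)
    ultimately show "\<exists>g\<in>G. h = \<Gamma> g" by auto
  qed
  then have "card G = card H" by (rule bij_betw_same_card)
  then show ?thesis by (simp add: W_def G_def H_def)
qed

lemma mset_bij_exists:
  assumes "finite A" "finite B" "image_mset w (mset_set A) = image_mset w' (mset_set B)"
  shows "\<exists>f. bij_betw f A B \<and> (\<forall>a\<in>A. w' (f a) = w a)"
  using assms
proof (induction A arbitrary: B rule: finite_induct)
  case empty
  then have "B = {}" by (simp add: mset_set_empty_iff)
  then show ?case by (auto simp: bij_betw_def)
next
  case (insert a A)
  have eq: "image_mset w (mset_set (insert a A)) = image_mset w' (mset_set B)" using insert.prems(2) .
  have fB: "finite B" using insert.prems(1) .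
  have "w a \<in># image_mset w (mset_set (insert a A))" using insert.hyps by simp
  then have "w a \<in># image_mset w' (mset_set B)" unfolding eq .
  then obtain b where b: "b \<in> B" "w' b = w a" using fB by auto
  have mB: "mset_set B = add_mset b (mset_set (B - {b}))" using b fB by (simp add: mset_set.remove)
  have "add_mset (w a) (image_mset w (mset_set A)) = image_mset w (mset_set (insert a A))"
    using insert.hyps by simp
  also have "\<dots> = add_mset (w' b) (image_mset w' (mset_set (B - {b})))" unfolding eq mB by simp
  finally have "image_mset w (mset_set A) = image_mset w' (mset_set (B - {b}))" using b by simp
  then obtain f where f: "bij_betw f A (B - {b})" "\<forall>a\<in>A. w' (f a) = w a"
    using insert.IH[of "B - {b}"] fB by auto
  define f' where "f' = f(a := b)"
  have "bij_betw f' A (B - {b})" using f(1) insert.hyps unfolding f'_def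
    by (subst bij_betw_cong[of A _ f]) auto
  then have "bij_betw f' (A \<union> {a}) ((B - {b}) \<union> {f' a})"
    using notIn_Un_bij_betw3[of a A f' "B - {b}"] insert.hyps by (simp add: f'_def)
  moreover have "(B - {b}) \<union> {f' a} = B" "A \<union> {a} = insert a A" using b by (auto simp: f'_def)
  ultimately have "bij_betw f' (insert a A) B" by simp
  moreover have "\<forall>x\<in>insert a A. w' (f' x) = w x" using f(2) b insert.hyps by (auto simp: f'_def)
  ultimately show ?case by blast
qed

definition Phi :: "nat multiset \<Rightarrow> (nat \<Rightarrow> nat) \<Rightarrow> nat" where
  "Phi l \<alpha> = W {..<size l} (\<lambda>i. sorted_list_of_multiset l ! i) \<alpha>"

definition alpha_of :: "nat multiset \<Rightarrow> nat \<Rightarrow> nat" where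
  "alpha_of l i = (if i < size l then sorted_list_of_multiset l ! i else 0)"

lemma mset_nth_list: "image_mset (\<lambda>i. xs ! i) (mset_set {..<length xs}) = mset xs"
proof -
  have "mset xs = mset (map (\<lambda>i. xs ! i) [0..<length xs])" by (simp add: map_nth)
  also have "\<dots> = image_mset (\<lambda>i. xs ! i) (mset_set {..<length xs})"
    by (simp add: atLeast0LessThan)
  finally show ?thesis by simp
qed

lemma size_sorted: "length (sorted_list_of_multiset l) = size l"
  by (metis mset_sorted_list_of_multiset size_mset)

lemma W_Phi:
  assumes "finite A" "image_mset w (mset_set A) = l"
  shows "W A w \<alpha> = Phi l \<alpha>"
proof -
  let ?xs = "sorted_list_of_multiset l"
  have "image_mset (\<lambda>i. ?xs ! i) (mset_set {..<size l}) = l"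
    using mset_nth_list[of ?xs] by (simp add: size_sorted)
  then obtain f where "bij_betw f A {..<size l}" "\<forall>a\<in>A. ?xs ! (f a) = w a"
    using mset_bij_exists[of A "{..<size l}" w "\<lambda>i. ?xs ! i"] assms by auto
  then show ?thesis unfolding Phi_def by (rule W_bij)
qed

lemma W_set_finite:
  fixes w :: "'c \<Rightarrow> nat" and \<alpha> :: "nat \<Rightarrow> nat"
  assumes "finite A" "\<forall>a\<in>A. w a > 0" "finite {i. \<alpha> i > 0}"
  shows "finite {h \<in> A \<rightarrow>\<^sub>E (UNIV::nat set). \<forall>i. (\<Sum>a\<in>{a\<in>A. h a = i}. w a) = \<alpha> i}"
proof (rule finite_subset[of _ "A \<rightarrow>\<^sub>E {i. \<alpha> i > 0}"])
  show "finite (A \<rightarrow>\<^sub>E {i. \<alpha> i > 0})" using assms by (intro finite_PiE) auto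
  show "{h \<in> A \<rightarrow>\<^sub>E (UNIV::nat set). \<forall>i. (\<Sum>a\<in>{a\<in>A. h a = i}. w a) = \<alpha> i} \<subseteq> A \<rightarrow>\<^sub>E {i. \<alpha> i > 0}"
  proof (rule subsetI)
    fix h assume "h \<in> {h \<in> A \<rightarrow>\<^sub>E (UNIV::nat set). \<forall>i. (\<Sum>a\<in>{a\<in>A. h a = i}. w a) = \<alpha> i}"
    then have h: "h \<in> A \<rightarrow>\<^sub>E UNIV" "\<forall>i. (\<Sum>a\<in>{a\<in>A. h a = i}. w a) = \<alpha> i" by auto
    have "h a \<in> {i. \<alpha> i > 0}" if a: "a \<in> A" for a
    proof -
    have "w a \<le> (\<Sum>a\<in>{x\<in>A. h x = h a}. w a)"
      using a assms(1) by (subst sum.remove[of _ a]) auto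
    moreover have "w a > 0" using assms(2) a by blast
    ultimately have "\<alpha> (h a) > 0" using h(2) by (metis order_less_le_trans)
    then show "h a \<in> {i. \<alpha> i > 0}" by simp
    qed
    then show "h \<in> A \<rightarrow>\<^sub>E {i. \<alpha> i > 0}" using h(1) by (auto simp: PiE_iff)
  qed
qed

lemma alpha_of_fin: "finite {i. alpha_of l i > 0}"
  by (rule finite_subset[of _ "{..<size l}"]) (auto simp: alpha_of_def split: if_splits)

lemma Phi_pos: assumes "0 \<notin># l" shows "Phi l (alpha_of l) > 0"
proof -
  let ?xs = "sorted_list_of_multiset l"
  let ?S = "{h \<in> {..<size l} \<rightarrow>\<^sub>E (UNIV::nat set). \<forall>i. (\<Sum>a\<in>{a\<in>{..<size l}. h a = i}. ?xs ! a) = alpha_of l i}"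
  have mem: "restrict id {..<size l} \<in> ?S"
  proof -
    have "(\<Sum>a\<in>{a\<in>{..<size l}. restrict id {..<size l} a = i}. ?xs ! a) = alpha_of l i" for i
    proof (cases "i < size l")
      case True
      then have "{a\<in>{..<size l}. restrict id {..<size l} a = i} = {i}" by auto
      then show ?thesis using True by (simp add: alpha_of_def)
    next
      case False
      then have "{a\<in>{..<size l}. restrict id {..<size l} a = i} = {}" by auto
      then show ?thesis using False by (simp add: alpha_of_def)
    qed
    then show ?thesis by auto
  qed
  moreover have "finite ?S"
  proof (rule W_set_finite[OF _ _ alpha_of_fin])
    show "\<forall>a\<in>{..<size l}. ?xs ! a > 0"
    proof
      fix a assume "a \<in> {..<size l}"
      then have "?xs ! a \<in> set ?xs" using nth_mem[of a ?xs] size_sorted[of l] by (simp del: set_sorted_list_of_multiset)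
      then have "?xs ! a \<in># mset ?xs" by (simp only: set_mset_mset)
      then have "?xs ! a \<in># l" by (simp only: mset_sorted_list_of_multiset)
      then show "?xs ! a > 0" using assms by (metis gr0I)
    qed
  qed simp
  ultimately have "card ?S > 0" using card_gt_0_iff[of ?S] mem by blast
  then show ?thesis unfolding Phi_def W_def .
qed

lemma tri:
  fixes w :: "'c \<Rightarrow> nat"
  assumes fin: "finite A" and wpos: "\<forall>a\<in>A. w a > 0" and l0: "0 \<notin># l"
    and Wp: "W A w (alpha_of l) > 0"
  shows "size l \<le> card A \<and> (card A = size l \<longrightarrow> image_mset w (mset_set A) = l)"
proof -
  let ?xs = "sorted_list_of_multiset l"
  let ?S = "{h \<in> A \<rightarrow>\<^sub>E (UNIV::nat set). \<forall>i. (\<Sum>a\<in>{a\<in>A. h a = i}. w a) = alpha_of l i}"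
  have "?S \<noteq> {}" using Wp unfolding W_def by (metis card.empty less_irrefl)
  then obtain h where h: "h \<in> A \<rightarrow>\<^sub>E UNIV" "\<And>i. (\<Sum>a\<in>{a\<in>A. h a = i}. w a) = alpha_of l i" by blast
  have xspos: "?xs ! i > 0" if "i < size l" for i
  proof -
    have "?xs ! i \<in> set ?xs" using nth_mem[of i ?xs] size_sorted[of l] that by (simp del: set_sorted_list_of_multiset)
    then have "?xs ! i \<in># mset ?xs" by (simp only: set_mset_mset)
    then have "?xs ! i \<in># l" by (simp only: mset_sorted_list_of_multiset)
    then show ?thesis using l0 by (metis gr0I)
  qed
  have sub: "{..<size l} \<subseteq> h ` A"
  proof
    fix i assume "i \<in> {..<size l}"
    then have "alpha_of l i > 0" using xspos by (simp add: alpha_of_def)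
    then have "{a\<in>A. h a = i} \<noteq> {}" using h(2)[of i] by (metis gr_implies_not0 sum.empty)
    then show "i \<in> h ` A" by blast
  qed
  have c1: "size l \<le> card (h ` A)" using card_mono[OF finite_imageI[OF fin] sub] by simp
  have c2: "card (h ` A) \<le> card A" using card_image_le[OF fin] .
  have "image_mset w (mset_set A) = l" if eq: "card A = size l"
  proof -
    have cc: "card (h ` A) = card A" using c1 c2 eq by simp
    then have inj: "inj_on h A" using inj_on_iff_eq_card[OF fin, of h] by simp
    have hA: "h ` A = {..<size l}"
      using card_subset_eq[OF finite_imageI[OF fin] sub] cc eq by simp
    have wa: "w a = ?xs ! (h a)" if a: "a \<in> A" for a
    proof -
      have "{x\<in>A. h x = h a} = {a}" using inj a by (auto dest: inj_onD)
      then have "w a = alpha_of l (h a)" using h(2)[of "h a"] by simp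
      moreover have "h a < size l" using hA a by auto
      ultimately show ?thesis by (simp add: alpha_of_def)
    qed
    have "image_mset w (mset_set A) = image_mset (\<lambda>a. ?xs ! (h a)) (mset_set A)"
      using wa fin by (intro image_mset_cong) auto
    also have "\<dots> = image_mset (\<lambda>i. ?xs ! i) (image_mset h (mset_set A))"
      by (simp add: image_mset.compositionality comp_def)
    also have "image_mset h (mset_set A) = mset_set {..<size l}"
      using image_mset_mset_set[OF inj] hA by simp
    also have "image_mset (\<lambda>i. ?xs ! i) (mset_set {..<size l}) = l"
      using mset_nth_list[of ?xs] by (simp add: size_sorted)
    finally show ?thesis .
  qed
  then show ?thesis using c1 c2 by simp
qed

lemma incl_excl:
  assumes "finite I" "finite A"
  shows "int (card {x\<in>A. \<forall>i\<in>I. \<not> P i x}) = (\<Sum>S\<in>Pow I. (-1)^card S * int (card {x\<in>A. \<forall>i\<in>S. P i x}))"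
  using assms
proof (induction I arbitrary: A rule: finite_induct)
  case empty
  then show ?case by simp
next
  case (insert j I)
  let ?Aj = "{x\<in>A. P j x}"
  have fAj: "finite ?Aj" using insert.prems by simp
  have split: "{x\<in>A. \<forall>i\<in>insert j I. \<not> P i x} = {x\<in>A. \<forall>i\<in>I. \<not> P i x} - {x\<in>?Aj. \<forall>i\<in>I. \<not> P i x}"
    by auto
  have "card {x\<in>A. \<forall>i\<in>insert j I. \<not> P i x} = card {x\<in>A. \<forall>i\<in>I. \<not> P i x} - card {x\<in>?Aj. \<forall>i\<in>I. \<not> P i x}"
    unfolding split by (rule card_Diff_subset) (use insert.prems in auto)
  moreover have "card {x\<in>?Aj. \<forall>i\<in>I. \<not> P i x} \<le> card {x\<in>A. \<forall>i\<in>I. \<not> P i x}"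
    by (rule card_mono) (use insert.prems in auto)
  ultimately have L: "int (card {x\<in>A. \<forall>i\<in>insert j I. \<not> P i x}) = int (card {x\<in>A. \<forall>i\<in>I. \<not> P i x}) - int (card {x\<in>?Aj. \<forall>i\<in>I. \<not> P i x})"
    by simp
  have P: "Pow (insert j I) = Pow I \<union> insert j ` Pow I" by (rule Pow_insert)
  have disj: "Pow I \<inter> insert j ` Pow I = {}" using insert.hyps by auto
  have inj: "inj_on (insert j) (Pow I)" using insert.hyps by (auto simp: inj_on_def)
  have fin: "finite (Pow I)" using insert.hyps by simp
  have "(\<Sum>S\<in>Pow (insert j I). (-1)^card S * int (card {x\<in>A. \<forall>i\<in>S. P i x}))
      = (\<Sum>S\<in>Pow I. (-1)^card S * int (card {x\<in>A. \<forall>i\<in>S. P i x}))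
        + (\<Sum>S\<in>insert j ` Pow I. (-1)^card S * int (card {x\<in>A. \<forall>i\<in>S. P i x}))"
    unfolding P using disj fin by (simp add: sum.union_disjoint)
  also have "(\<Sum>S\<in>insert j ` Pow I. (-1)^card S * int (card {x\<in>A. \<forall>i\<in>S. P i x}))
     = (\<Sum>S\<in>Pow I. (-1)^card (insert j S) * int (card {x\<in>A. \<forall>i\<in>insert j S. P i x}))"
    using inj by (simp add: sum.reindex)
  also have "\<dots> = (\<Sum>S\<in>Pow I. - ((-1)^card S * int (card {x\<in>?Aj. \<forall>i\<in>S. P i x})))"
  proof (rule sum.cong)
    fix S assume S: "S \<in> Pow I"
    then have "finite S" "j \<notin> S" using insert.hyps finite_subset by auto
    then have "card (insert j S) = Suc (card S)" by simp
    moreover have "{x\<in>A. \<forall>i\<in>insert j S. P i x} = {x\<in>?Aj. \<forall>i\<in>S. P i x}" by auto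
    ultimately show "(-1)^card (insert j S) * int (card {x\<in>A. \<forall>i\<in>insert j S. P i x})
       = - ((-1)^card S * int (card {x\<in>?Aj. \<forall>i\<in>S. P i x}))" by simp
  qed simp
  also have "\<dots> = - int (card {x\<in>?Aj. \<forall>i\<in>I. \<not> P i x})"
    using insert.IH[OF fAj] by (simp add: sum_negf)
  finally show ?case using L insert.IH[OF insert.prems] by simp
qed



definition adj :: "'a set set \<Rightarrow> ('a \<times> 'a) set" where "adj S = {(x,y). {x,y} \<in> S}"
definition comp :: "'a set set \<Rightarrow> 'a \<Rightarrow> 'a set" where "comp S x = {y. (x,y) \<in> (adj S)\<^sup>*}"
definition comps :: "'a set \<Rightarrow> 'a set set \<Rightarrow> 'a set set" where "comps V S = comp S ` V"
definition lam :: "'a set \<Rightarrow> 'a set set \<Rightarrow> nat multiset" where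
  "lam V S = image_mset card (mset_set (comps V S))"
definition constc :: "('a \<Rightarrow> nat) \<Rightarrow> 'a set \<Rightarrow> bool" where
  "constc \<kappa> e \<longleftrightarrow> (\<forall>x\<in>e. \<forall>y\<in>e. \<kappa> x = \<kappa> y)"

lemma sym_adj: "(x,y) \<in> adj S \<Longrightarrow> (y,x) \<in> adj S"
  by (auto simp: adj_def insert_commute)

lemma rt_sym: "(x,y) \<in> (adj S)\<^sup>* \<Longrightarrow> (y,x) \<in> (adj S)\<^sup>*"
proof (induction rule: rtrancl_induct)
  case base then show ?case by simp
next
  case (step y z)
  then show ?case using sym_adj by (meson converse_rtrancl_into_rtrancl)
qed

lemma comp_self: "x \<in> comp S x" by (simp add: comp_def)

lemma comp_eq: "y \<in> comp S x \<Longrightarrow> comp S y = comp S x"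
proof -
  assume "y \<in> comp S x"
  then have xy: "(x,y) \<in> (adj S)\<^sup>*" by (simp add: comp_def)
  then have yx: "(y,x) \<in> (adj S)\<^sup>*" by (rule rt_sym)
  show ?thesis unfolding comp_def using rtrancl_trans[OF xy] rtrancl_trans[OF yx] by blast
qed

lemma comp_mono: "S \<subseteq> T \<Longrightarrow> comp S x \<subseteq> comp T x"
proof -
  assume "S \<subseteq> T"
  then have "adj S \<subseteq> adj T" by (auto simp: adj_def)
  then show ?thesis unfolding comp_def using rtrancl_mono by blast
qed

locale sg =
  fixes V :: "'a set" and E :: "'a set set"
  assumes simple: "simple_graph V E"
begin

lemma finV: "finite V" using simple by (simp add: simple_graph_def)

lemma edge: "e \<in> E \<Longrightarrow> \<exists>u v. u \<in> V \<and> v \<in> V \<and> u \<noteq> v \<and> e = {u,v}"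
  using simple by (simp add: simple_graph_def)

lemma finE: "finite E"
proof -
  have "E \<subseteq> Pow V" using edge by blast
  then show ?thesis using finV by (simp add: finite_subset)
qed

lemma adj_edge: "S \<subseteq> E \<Longrightarrow> (x,y) \<in> adj S \<Longrightarrow> x \<in> V \<and> y \<in> V \<and> x \<noteq> y"
proof -
  assume S: "S \<subseteq> E" and "(x,y) \<in> adj S"
  then have "{x,y} \<in> E" by (auto simp: adj_def)
  then obtain u v where "u \<in> V" "v \<in> V" "u \<noteq> v" "{x,y} = {u,v}" using edge by blast
  then show ?thesis by (auto simp: doubleton_eq_iff)
qed

lemma comp_sub: assumes "S \<subseteq> E" "x \<in> V" shows "comp S x \<subseteq> V"
proof
  fix y assume "y \<in> comp S x"
  then have "(x,y) \<in> (adj S)\<^sup>*" by (simp add: comp_def)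
  then show "y \<in> V"
  proof (induction rule: rtrancl_induct)
    case base then show ?case using assms(2) .
  next
    case (step y z) then show ?case using adj_edge[OF assms(1)] by blast
  qed
qed

lemma comps_fin: "finite (comps V S)" using finV by (simp add: comps_def)

lemma comps_union: "S \<subseteq> E \<Longrightarrow> \<Union>(comps V S) = V"
proof -
  assume S: "S \<subseteq> E"
  show ?thesis
  proof
    show "\<Union>(comps V S) \<subseteq> V" using comp_sub[OF S] by (auto simp: comps_def)
    show "V \<subseteq> \<Union>(comps V S)"
    proof
      fix x assume "x \<in> V"
      then have "comp S x \<in> comps V S" by (simp add: comps_def)
      moreover have "x \<in> comp S x" by (rule comp_self)
      ultimately show "x \<in> \<Union>(comps V S)" by blast
    qed
  qed
qed

lemma comps_card_pos: "S \<subseteq> E \<Longrightarrow> C \<in> comps V S \<Longrightarrow> card C > 0"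
proof -
  assume "S \<subseteq> E" "C \<in> comps V S"
  then obtain x where x: "x \<in> V" "C = comp S x" by (auto simp: comps_def)
  then have "finite C" using finite_subset[OF comp_sub[OF \<open>S \<subseteq> E\<close> x(1)] finV] by simp
  moreover have "C \<noteq> {}" using x(2) comp_self[of x S] by auto
  ultimately show ?thesis by (simp add: card_gt_0_iff)
qed

lemma comps_disj: "C \<in> comps V S \<Longrightarrow> D \<in> comps V S \<Longrightarrow> C \<noteq> D \<Longrightarrow> C \<inter> D = {}"
proof -
  assume "C \<in> comps V S" "D \<in> comps V S" "C \<noteq> D"
  then obtain x y where "C = comp S x" "D = comp S y" by (auto simp: comps_def)
  then show ?thesis using comp_eq \<open>C \<noteq> D\<close> by (metis disjoint_iff)
qed

lemma const_iff: assumes S: "S \<subseteq> E" shows "(\<forall>e\<in>S. constc \<kappa> e) \<longleftrightarrow> (\<forall>x y. (x,y) \<in> (adj S)\<^sup>* \<longrightarrow> \<kappa> x = \<kappa> y)"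
proof
  assume c: "\<forall>e\<in>S. constc \<kappa> e"
  show "\<forall>x y. (x,y) \<in> (adj S)\<^sup>* \<longrightarrow> \<kappa> x = \<kappa> y"
  proof (intro allI impI)
    fix x y assume "(x,y) \<in> (adj S)\<^sup>*"
    then show "\<kappa> x = \<kappa> y"
    proof (induction rule: rtrancl_induct)
      case (step y z)
      then have "{y,z} \<in> S" by (simp add: adj_def)
      then show ?case using c step by (auto simp: constc_def)
    qed simp
  qed
next
  assume c: "\<forall>x y. (x,y) \<in> (adj S)\<^sup>* \<longrightarrow> \<kappa> x = \<kappa> y"
  show "\<forall>e\<in>S. constc \<kappa> e"
  proof
    fix e assume "e \<in> S"
    then have "e \<in> E" using S by auto
    then obtain u v where "e = {u,v}" using edge by blast
    with \<open>e \<in> S\<close> have "(u,v) \<in> adj S" "(v,u) \<in> adj S" by (auto simp: adj_def insert_commute)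
    then show "constc \<kappa> e" using c \<open>e = {u,v}\<close> by (auto simp: constc_def)
  qed
qed


lemma rt_V: assumes S: "S \<subseteq> E" and r: "(x,y) \<in> (adj S)\<^sup>*" and ne: "x \<noteq> y" shows "x \<in> V \<and> y \<in> V"
proof -
  from r ne obtain z where "(x,z) \<in> adj S" by (metis converse_rtranclE)
  then have xV: "x \<in> V" using adj_edge[OF S] by blast
  then have "y \<in> comp S x" using r by (simp add: comp_def)
  then have "y \<in> V" using comp_sub[OF S xV] by blast
  with xV show ?thesis by simp
qed

lemma comps_fin_mem: "S \<subseteq> E \<Longrightarrow> C \<in> comps V S \<Longrightarrow> finite C"
proof -
  assume S: "S \<subseteq> E" and "C \<in> comps V S"
  then obtain x where x: "x \<in> V" "C = comp S x" by (auto simp: comps_def)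
  show ?thesis unfolding x(2) by (rule finite_subset[OF comp_sub[OF S x(1)] finV])
qed

lemma count_Theta:
  assumes S: "S \<subseteq> E"
  shows "card {v\<in>V. h (comp S v) = i} = (\<Sum>C\<in>{C\<in>comps V S. h C = i}. card C)"
proof -
  have eq: "{v\<in>V. h (comp S v) = i} = \<Union>{C\<in>comps V S. h C = i}"
  proof
    show "{v\<in>V. h (comp S v) = i} \<subseteq> \<Union>{C\<in>comps V S. h C = i}"
    proof
      fix v assume v: "v \<in> {v\<in>V. h (comp S v) = i}"
      then have "comp S v \<in> {C\<in>comps V S. h C = i}" by (simp add: comps_def)
      moreover have "v \<in> comp S v" by (rule comp_self)
      ultimately show "v \<in> \<Union>{C\<in>comps V S. h C = i}" by blast
    qed
    show "\<Union>{C\<in>comps V S. h C = i} \<subseteq> {v\<in>V. h (comp S v) = i}"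
    proof
      fix v assume "v \<in> \<Union>{C\<in>comps V S. h C = i}"
      then obtain C where C: "C \<in> comps V S" "h C = i" "v \<in> C" by blast
      then obtain x where x: "x \<in> V" "C = comp S x" by (auto simp: comps_def)
      have "comp S v = C" using comp_eq[of v S x] C(3) x(2) by simp
      moreover have "v \<in> V" using comp_sub[OF S x(1)] C(3) x(2) by blast
      ultimately show "v \<in> {v\<in>V. h (comp S v) = i}" using C(2) by simp
    qed
  qed
  have "card (\<Union>{C\<in>comps V S. h C = i}) = sum card {C\<in>comps V S. h C = i}"
  proof (rule card_Union_disjoint)
    show "pairwise disjnt {C\<in>comps V S. h C = i}"
      unfolding pairwise_def disjnt_def using comps_disj by auto
    show "\<And>A. A \<in> {C\<in>comps V S. h C = i} \<Longrightarrow> finite A" using comps_fin_mem[OF S] by auto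
  qed
  then show ?thesis unfolding eq .
qed

lemma count_const:
  assumes S: "S \<subseteq> E"
  shows "card {\<kappa> \<in> V \<rightarrow>\<^sub>E (UNIV::nat set). (\<forall>i. card {v\<in>V. \<kappa> v = i} = \<alpha> i) \<and> (\<forall>e\<in>S. constc \<kappa> e)}
         = W (comps V S) card \<alpha>"
proof -
  define K where "K = {\<kappa> \<in> V \<rightarrow>\<^sub>E (UNIV::nat set). (\<forall>i. card {v\<in>V. \<kappa> v = i} = \<alpha> i) \<and> (\<forall>e\<in>S. constc \<kappa> e)}"
  define H where "H = {h \<in> comps V S \<rightarrow>\<^sub>E (UNIV::nat set). \<forall>i. (\<Sum>C\<in>{C\<in>comps V S. h C = i}. card C) = \<alpha> i}"
  define \<Theta> where "\<Theta> = (\<lambda>h::'a set \<Rightarrow> nat. \<lambda>v\<in>V. h (comp S v))"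
  have cnt: "card {v\<in>V. \<Theta> h v = i} = (\<Sum>C\<in>{C\<in>comps V S. h C = i}. card C)" for h i
  proof -
    have "{v\<in>V. \<Theta> h v = i} = {v\<in>V. h (comp S v) = i}" by (auto simp: \<Theta>_def)
    then show ?thesis using count_Theta[OF S] by simp
  qed
  have constT: "\<forall>e\<in>S. constc (\<Theta> h) e" for h
  proof -
    have "\<Theta> h x = \<Theta> h y" if r: "(x,y) \<in> (adj S)\<^sup>*" for x y
    proof (cases "x = y")
      case False
      then have "x \<in> V" "y \<in> V" using rt_V[OF S r] by auto
      moreover have "comp S y = comp S x" using r comp_eq[of y S x] by (simp add: comp_def)
      ultimately show ?thesis by (simp add: \<Theta>_def)
    qed simp
    then show ?thesis using const_iff[OF S] by blast
  qed
  have "bij_betw \<Theta> H K"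
  proof (rule bij_betwI')
    fix x y assume "x \<in> H" "y \<in> H"
    show "(\<Theta> x = \<Theta> y) = (x = y)"
    proof
      assume e: "\<Theta> x = \<Theta> y"
      show "x = y"
      proof (rule extensionalityI[of _ "comps V S"])
        show "x \<in> extensional (comps V S)" "y \<in> extensional (comps V S)"
          using \<open>x\<in>H\<close> \<open>y\<in>H\<close> by (auto simp: H_def PiE_iff)
        fix C assume "C \<in> comps V S"
        then obtain v where "v \<in> V" "C = comp S v" by (auto simp: comps_def)
        then show "x C = y C" using fun_cong[OF e, of v] by (simp add: \<Theta>_def)
      qed
    qed simp
  next
    fix h assume "h \<in> H" then show "\<Theta> h \<in> K" using cnt constT by (auto simp: H_def K_def \<Theta>_def)
  next
    fix \<kappa> assume k: "\<kappa> \<in> K"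
    define h where "h = (\<lambda>C\<in>comps V S. \<kappa> (SOME x. x \<in> C))"
    have "\<Theta> h = \<kappa>"
    proof (rule extensionalityI[of _ V])
      show "\<Theta> h \<in> extensional V" by (simp add: \<Theta>_def)
      show "\<kappa> \<in> extensional V" using k by (auto simp: K_def PiE_iff)
      fix v assume v: "v \<in> V"
      have "(SOME x. x \<in> comp S v) \<in> comp S v" using comp_self[of v S] by (rule someI)
      then have "(v, SOME x. x \<in> comp S v) \<in> (adj S)\<^sup>*" by (simp add: comp_def)
      moreover have "\<forall>x y. (x,y) \<in> (adj S)\<^sup>* \<longrightarrow> \<kappa> x = \<kappa> y" using k const_iff[OF S] by (auto simp: K_def)
      ultimately have "\<kappa> (SOME x. x \<in> comp S v) = \<kappa> v" by metis
      moreover have "comp S v \<in> comps V S" using v by (simp add: comps_def)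
      ultimately show "\<Theta> h v = \<kappa> v" using v by (simp add: \<Theta>_def h_def)
    qed
    moreover have "h \<in> H"
    proof -
      have "(\<Sum>C\<in>{C\<in>comps V S. h C = i}. card C) = \<alpha> i" for i
        using cnt[of h i] \<open>\<Theta> h = \<kappa>\<close> k by (auto simp: K_def)
      then show ?thesis by (auto simp: H_def h_def)
    qed
    ultimately show "\<exists>h\<in>H. \<kappa> = \<Theta> h" by auto
  qed
  then have "card H = card K" by (rule bij_betw_same_card)
  then show ?thesis by (simp add: W_def H_def K_def)
qed


lemma proper_iff: "proper_coloring V E \<kappa> \<longleftrightarrow> \<kappa> \<in> V \<rightarrow>\<^sub>E UNIV \<and> (\<forall>e\<in>E. \<not> constc \<kappa> e)"
proof -
  have "(\<forall>u v. {u, v} \<in> E \<and> u \<noteq> v \<longrightarrow> \<kappa> u \<noteq> \<kappa> v) \<longleftrightarrow> (\<forall>e\<in>E. \<not> constc \<kappa> e)"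
  proof
    assume a: "\<forall>u v. {u, v} \<in> E \<and> u \<noteq> v \<longrightarrow> \<kappa> u \<noteq> \<kappa> v"
    show "\<forall>e\<in>E. \<not> constc \<kappa> e"
    proof
      fix e assume "e \<in> E"
      then obtain u v where "u \<noteq> v" "e = {u,v}" using edge by blast
      then show "\<not> constc \<kappa> e" using a \<open>e \<in> E\<close> by (auto simp: constc_def)
    qed
  next
    assume a: "\<forall>e\<in>E. \<not> constc \<kappa> e"
    show "\<forall>u v. {u, v} \<in> E \<and> u \<noteq> v \<longrightarrow> \<kappa> u \<noteq> \<kappa> v"
    proof (intro allI impI)
      fix u v assume "{u, v} \<in> E \<and> u \<noteq> v"
      then have "\<not> constc \<kappa> {u,v}" using a by blast
      then show "\<kappa> u \<noteq> \<kappa> v" by (auto simp: constc_def)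
    qed
  qed
  then show ?thesis by (simp add: proper_coloring_def)
qed

lemma colset_finite: "finite {\<kappa> \<in> V \<rightarrow>\<^sub>E (UNIV::nat set). \<forall>i. card {v\<in>V. \<kappa> v = i} = \<alpha> i}"
  (is "finite ?A")
proof (cases "?A = {}")
  case False
  then obtain \<kappa>0 where k0: "\<kappa>0 \<in> ?A" by blast
  have supp: "{i. \<alpha> i > 0} \<subseteq> \<kappa>0 ` V"
  proof
    fix i assume "i \<in> {i. \<alpha> i > 0}"
    then have "card {v\<in>V. \<kappa>0 v = i} > 0" using k0 by auto
    then obtain v where "v \<in> V" "\<kappa>0 v = i" by (metis (mono_tags, lifting) card.empty empty_Collect_eq less_irrefl)
    then show "i \<in> \<kappa>0 ` V" by blast
  qed
  then have fs: "finite {i. \<alpha> i > 0}" using finV finite_subset by blast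
  show ?thesis
  proof (rule finite_subset[of _ "V \<rightarrow>\<^sub>E {i. \<alpha> i > 0}"])
    show "finite (V \<rightarrow>\<^sub>E {i. \<alpha> i > 0})" using fs finV by (intro finite_PiE) auto
    show "?A \<subseteq> V \<rightarrow>\<^sub>E {i. \<alpha> i > 0}"
    proof
      fix \<kappa> assume k: "\<kappa> \<in> ?A"
      have "\<kappa> v \<in> {i. \<alpha> i > 0}" if v: "v \<in> V" for v
      proof -
        have "v \<in> {u\<in>V. \<kappa> u = \<kappa> v}" using v by simp
        then have "card {u\<in>V. \<kappa> u = \<kappa> v} > 0" using finV by (auto simp: card_gt_0_iff)
        then show ?thesis using k by auto
      qed
      then show "\<kappa> \<in> V \<rightarrow>\<^sub>E {i. \<alpha> i > 0}" using k by (auto simp: PiE_iff)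
    qed
  qed
next
  case True then show ?thesis by (simp only: finite.emptyI)
qed

definition cc :: "nat multiset \<Rightarrow> int" where
  "cc l = (\<Sum>S\<in>{S\<in>Pow E. lam V S = l}. (-1::int)^card S)"

definition Lams :: "nat multiset set" where "Lams = lam V ` Pow E"

lemma Lams_fin: "finite Lams" using finE by (simp add: Lams_def)

lemma lam_no0: "S \<subseteq> E \<Longrightarrow> 0 \<notin># lam V S"
  using comps_card_pos comps_fin by (auto simp: lam_def) (metis less_irrefl)

lemma Lams_no0: "l \<in> Lams \<Longrightarrow> 0 \<notin># l"
  using lam_no0 by (auto simp: Lams_def)

lemma csf_expand: "int (csf V E \<alpha>) = (\<Sum>l\<in>Lams. cc l * int (Phi l \<alpha>))"
proof -
  let ?A = "{\<kappa> \<in> V \<rightarrow>\<^sub>E (UNIV::nat set). \<forall>i. card {v\<in>V. \<kappa> v = i} = \<alpha> i}"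
  have "{\<kappa>. proper_coloring V E \<kappa> \<and> (\<forall>i. card {v \<in> V. \<kappa> v = i} = \<alpha> i)} = {\<kappa>\<in>?A. \<forall>e\<in>E. \<not> constc \<kappa> e}"
    using proper_iff by auto
  then have "int (csf V E \<alpha>) = int (card {\<kappa>\<in>?A. \<forall>e\<in>E. \<not> constc \<kappa> e})" by (simp add: csf_def)
  also have "\<dots> = (\<Sum>S\<in>Pow E. (-1)^card S * int (card {\<kappa>\<in>?A. \<forall>e\<in>S. constc \<kappa> e}))"
    by (rule incl_excl[OF finE colset_finite])
  also have "\<dots> = (\<Sum>S\<in>Pow E. (-1)^card S * int (Phi (lam V S) \<alpha>))"
  proof (rule sum.cong)
    fix S assume "S \<in> Pow E"
    then have S: "S \<subseteq> E" by simp
    have "{\<kappa>\<in>?A. \<forall>e\<in>S. constc \<kappa> e} = {\<kappa> \<in> V \<rightarrow>\<^sub>E (UNIV::nat set). (\<forall>i. card {v\<in>V. \<kappa> v = i} = \<alpha> i) \<and> (\<forall>e\<in>S. constc \<kappa> e)}"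
      by auto
    then have "card {\<kappa>\<in>?A. \<forall>e\<in>S. constc \<kappa> e} = W (comps V S) card \<alpha>" using count_const[OF S] by simp
    also have "\<dots> = Phi (lam V S) \<alpha>" by (rule W_Phi[OF comps_fin]) (simp add: lam_def)
    finally show "(-1)^card S * int (card {\<kappa>\<in>?A. \<forall>e\<in>S. constc \<kappa> e}) = (-1)^card S * int (Phi (lam V S) \<alpha>)"
      by simp
  qed simp
  also have "\<dots> = (\<Sum>l\<in>Lams. \<Sum>S\<in>{S\<in>Pow E. lam V S = l}. (-1)^card S * int (Phi (lam V S) \<alpha>))"
    unfolding Lams_def using finE by (subst sum.image_gen[where g = "lam V"]) auto
  also have "\<dots> = (\<Sum>l\<in>Lams. cc l * int (Phi l \<alpha>))"
    unfolding cc_def by (intro sum.cong refl) (simp add: sum_distrib_right)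
  finally show ?thesis .
qed

end



lemma (in sg) cc_out: "l \<notin> Lams \<Longrightarrow> cc l = 0"
proof -
  assume "l \<notin> Lams"
  then have "{S\<in>Pow E. lam V S = l} = {}" by (auto simp: Lams_def)
  then show ?thesis unfolding cc_def by (simp only: sum.empty)
qed

lemma (in sg) csf_expand_L:
  assumes "finite L" "Lams \<subseteq> L"
  shows "int (csf V E \<alpha>) = (\<Sum>l\<in>L. cc l * int (Phi l \<alpha>))"
  unfolding csf_expand using assms cc_out by (intro sum.mono_neutral_left) auto

lemma cc_eq:
  assumes g1: "sg V1 E1" and g2: "sg V2 E2" and eq: "csf V1 E1 = csf V2 E2"
  shows "sg.cc V1 E1 l = sg.cc V2 E2 l"
proof (rule ccontr)
  interpret g1: sg V1 E1 by (rule g1)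
  interpret g2: sg V2 E2 by (rule g2)
  assume ne: "g1.cc l \<noteq> g2.cc l"
  define L where "L = g1.Lams \<union> g2.Lams"
  define d where "d l = g1.cc l - g2.cc l" for l
  have finL: "finite L" using g1.Lams_fin g2.Lams_fin by (simp add: L_def)
  have no0: "l \<in> L \<Longrightarrow> 0 \<notin># l" for l using g1.Lams_no0 g2.Lams_no0 by (auto simp: L_def)
  have zero: "(\<Sum>l\<in>L. d l * int (Phi l \<alpha>)) = 0" for \<alpha>
  proof -
    have "int (csf V1 E1 \<alpha>) = (\<Sum>l\<in>L. g1.cc l * int (Phi l \<alpha>))"
      by (rule g1.csf_expand_L[OF finL]) (simp add: L_def)
    moreover have "int (csf V2 E2 \<alpha>) = (\<Sum>l\<in>L. g2.cc l * int (Phi l \<alpha>))"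
      by (rule g2.csf_expand_L[OF finL]) (simp add: L_def)
    ultimately show ?thesis using eq by (simp add: d_def left_diff_distrib sum_subtractf)
  qed
  define D where "D = {l\<in>L. d l \<noteq> 0}"
  have "l \<in> L" using ne g1.cc_out g2.cc_out unfolding L_def by force
  then have "l \<in> D" using ne by (auto simp: D_def d_def)
  then have Dne: "D \<noteq> {}" by blast
  have finD: "finite D" using finL by (simp add: D_def)
  have "Max (size ` D) \<in> size ` D" using finD Dne by (intro Max_in) auto
  then obtain l0 where l0: "l0 \<in> D" "size l0 = Max (size ` D)" by (metis imageE)
  have maxs: "l \<in> D \<Longrightarrow> size l \<le> size l0" for l using l0 finD by simp
  define \<alpha>0 where "\<alpha>0 = alpha_of l0"
  have other: "d l * int (Phi l \<alpha>0) = 0" if l: "l \<in> L" "l \<noteq> l0" for l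
  proof (cases "d l = 0")
    case False
    then have "l \<in> D" using l by (simp add: D_def)
    then have sl: "size l \<le> size l0" by (rule maxs)
    have "Phi l \<alpha>0 = 0"
    proof (rule ccontr)
      assume "Phi l \<alpha>0 \<noteq> 0"
      then have Wp: "W {..<size l} (\<lambda>i. sorted_list_of_multiset l ! i) (alpha_of l0) > 0"
        by (simp add: Phi_def \<alpha>0_def)
      have pos: "\<forall>a\<in>{..<size l}. sorted_list_of_multiset l ! a > 0"
      proof
        fix a assume "a \<in> {..<size l}"
        then have "sorted_list_of_multiset l ! a \<in> set (sorted_list_of_multiset l)"
          using nth_mem[of a "sorted_list_of_multiset l"] size_sorted[of l] by (simp del: set_sorted_list_of_multiset)
        then have "sorted_list_of_multiset l ! a \<in># l" by simp
        then show "sorted_list_of_multiset l ! a > 0" using no0[OF l(1)] by (metis gr0I)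
      qed
      have "size l0 \<le> card {..<size l} \<and> (card {..<size l} = size l0 \<longrightarrow>
          image_mset (\<lambda>i. sorted_list_of_multiset l ! i) (mset_set {..<size l}) = l0)"
        by (rule tri[OF _ pos no0 Wp]) (use l0 D_def in auto)
      moreover have "image_mset (\<lambda>i. sorted_list_of_multiset l ! i) (mset_set {..<size l}) = l"
        using mset_nth_list[of "sorted_list_of_multiset l"] by (simp add: size_sorted)
      ultimately show False using sl l(2) by (metis card_lessThan le_antisym)
    qed
    then show ?thesis by simp
  qed simp
  have "(\<Sum>l\<in>L. d l * int (Phi l \<alpha>0)) = d l0 * int (Phi l0 \<alpha>0)"
  proof -
    have "l0 \<in> L" using l0(1) by (simp add: D_def)
    moreover have "(\<Sum>l\<in>L - {l0}. d l * int (Phi l \<alpha>0)) = 0"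
      by (rule sum.neutral) (use other in auto)
    ultimately show ?thesis using finL by (simp add: sum.remove)
  qed
  moreover have "d l0 \<noteq> 0" using l0 by (simp add: D_def)
  moreover have "Phi l0 \<alpha>0 > 0" unfolding \<alpha>0_def by (rule Phi_pos) (use l0 no0 D_def in auto)
  ultimately show False using zero[of \<alpha>0] by simp
qed



lemma rtp_last: "rtrancl_path r x xs y \<Longrightarrow> xs \<noteq> [] \<Longrightarrow> last xs = y"
  by (induction rule: rtrancl_path.induct) (auto elim: rtrancl_path.cases)

lemma rtp_nil: "rtrancl_path r x [] y \<Longrightarrow> x = y"
  by (auto elim: rtrancl_path.cases)

lemma rtp_nth: "rtrancl_path r x xs y \<Longrightarrow> i < length xs \<Longrightarrow> r ((x#xs)!i) (xs!i)"
proof (induction arbitrary: i rule: rtrancl_path.induct)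
  case (base x) then show ?case by simp
next
  case (step x y ys z)
  then show ?case by (cases i) auto
qed

lemma rt_to_path:
  assumes "(x,y) \<in> R\<^sup>*"
  obtains xs where "rtrancl_path (\<lambda>a b. (a,b) \<in> R) x xs y" "distinct (x#xs)"
proof -
  have "(\<lambda>a b. (a,b) \<in> R)\<^sup>*\<^sup>* x y" using assms by (simp add: rtranclp_rtrancl_eq)
  then have "\<exists>xs. rtrancl_path (\<lambda>a b. (a,b) \<in> R) x xs y" by (simp only: rtranclp_eq_rtrancl_path)
  then obtain xs where "rtrancl_path (\<lambda>a b. (a,b) \<in> R) x xs y" by (elim exE)
  then obtain xs' where "rtrancl_path (\<lambda>a b. (a,b) \<in> R) x xs' y" "distinct (x#xs')"
    by (rule rtrancl_path_distinct)
  then show ?thesis by (rule that)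
qed

lemma adj_insert: "adj (insert {u,v} S) = adj S \<union> {(u,v),(v,u)}"
  by (auto simp: adj_def doubleton_eq_iff)

lemma comp_step: "y \<in> comp S w \<Longrightarrow> (y,z) \<in> adj S \<Longrightarrow> z \<in> comp S w"
  unfolding comp_def by (simp add: rtrancl_into_rtrancl)

lemma comp_insert:
  "comp (insert {u,v} S) x = (if x \<in> comp S u \<union> comp S v then comp S u \<union> comp S v else comp S x)"
proof -
  let ?S' = "insert {u,v} S"
  let ?U = "comp S u \<union> comp S v"
  let ?T = "(if x \<in> ?U then ?U else comp S x)"
  have sub: "comp ?S' x \<subseteq> ?T"
  proof
    fix y assume "y \<in> comp ?S' x"
    then have "(x,y) \<in> (adj ?S')\<^sup>*" by (simp add: comp_def)
    then show "y \<in> ?T"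
    proof (induction rule: rtrancl_induct)
      case base
      show ?case using comp_self[of x S] by auto
    next
      case (step y z)
      have a: "(y,z) \<in> adj S \<or> (y = u \<and> z = v) \<or> (y = v \<and> z = u)" using step(2) by (auto simp: adj_insert)
      show ?case
      proof (cases "x \<in> ?U")
        case True
        then have yU: "y \<in> ?U" using step(3) by simp
        have "z \<in> ?U"
        proof -
          { assume "(y,z) \<in> adj S"
            then have ?thesis using yU comp_step[of y S u z] comp_step[of y S v z] by blast }
          moreover
          { assume "(y = u \<and> z = v) \<or> (y = v \<and> z = u)"
            then have ?thesis using comp_self[of u S] comp_self[of v S] by auto }
          ultimately show ?thesis using a by blast
        qed
        then show ?thesis using True by simp
      next
        case False
        then have yx: "y \<in> comp S x" using step(3) by simp
        have "z \<in> comp S x"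
        proof -
          { assume "(y,z) \<in> adj S" then have ?thesis using comp_step[OF yx] by simp }
          moreover
          { assume "y = u"
            then have "(x,u) \<in> (adj S)\<^sup>*" using yx by (simp add: comp_def)
            then have "x \<in> comp S u" using rt_sym by (simp add: comp_def)
            then have False using False by simp }
          moreover
          { assume "y = v"
            then have "(x,v) \<in> (adj S)\<^sup>*" using yx by (simp add: comp_def)
            then have "x \<in> comp S v" using rt_sym by (simp add: comp_def)
            then have False using False by simp }
          ultimately show ?thesis using a by blast
        qed
        then show ?thesis using False by simp
      qed
    qed
  qed
  have mono: "comp S w \<subseteq> comp ?S' w" for w by (rule comp_mono) auto
  have uv: "v \<in> comp ?S' u"
  proof -
    have "(u,v) \<in> adj ?S'" by (simp add: adj_insert)
    then show ?thesis by (simp add: comp_def)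
  qed
  have Uu: "?U \<subseteq> comp ?S' u"
  proof -
    have "comp ?S' v = comp ?S' u" using comp_eq[OF uv] .
    then show ?thesis using mono[of u] mono[of v] by auto
  qed
  have sup: "?T \<subseteq> comp ?S' x"
  proof (cases "x \<in> ?U")
    case True
    have "x \<in> comp ?S' u" using True Uu by blast
    then have "comp ?S' x = comp ?S' u" by (rule comp_eq)
    then show ?thesis using True Uu by simp
  next
    case False then show ?thesis using mono[of x] by simp
  qed
  show ?thesis using sub sup by (rule antisym)
qed

locale forestl = sg +
  assumes acyc: "\<not> (\<exists>vs. is_cycle E vs)"
begin

lemma no_cyc_conn:
  assumes S: "insert e S \<subseteq> E" and eS: "e \<notin> S" and e: "e = {u,v}" and uv: "u \<noteq> v"
  shows "v \<notin> comp S u"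
proof
  assume "v \<in> comp S u"
  then have "(u,v) \<in> (adj S)\<^sup>*" by (simp add: comp_def)
  then obtain xs where p: "rtrancl_path (\<lambda>a b. (a,b) \<in> adj S) u xs v" and d: "distinct (u#xs)"
    by (rule rt_to_path)
  have xsne: "xs \<noteq> []"
  proof
    assume "xs = []"
    then have "u = v" using p rtp_nil by simp
    then show False using uv by simp
  qed
  have lastv: "last xs = v" using rtp_last[OF p xsne] .
  have len: "length xs \<ge> 2"
  proof (rule ccontr)
    assume "\<not> length xs \<ge> 2"
    moreover have "length xs > 0" using xsne by simp
    ultimately have "length xs = 1" by linarith
    then obtain w where xs: "xs = [w]" by (metis One_nat_def length_0_conv length_Suc_conv)
    then have "w = v" using lastv by simp
    then have "(u,v) \<in> adj S" using rtp_nth[OF p, of 0] xs by simp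
    then have "{u,v} \<in> S" by (simp add: adj_def)
    then show False using eS e by simp
  qed
  let ?vs = "u # xs"
  have "is_cycle E ?vs"
    unfolding is_cycle_def
  proof (intro conjI allI impI)
    show "3 \<le> length ?vs" using len by simp
    show "distinct ?vs" using d .
    fix i assume i: "i < length ?vs"
    show "{?vs ! i, ?vs ! ((i + 1) mod length ?vs)} \<in> E"
    proof (cases "i < length xs")
      case True
      then have "(i + 1) mod length ?vs = i + 1" by simp
      moreover have "((u#xs)!i, xs!i) \<in> adj S" using rtp_nth[OF p True] by simp
      ultimately show ?thesis using S by (auto simp: adj_def)
    next
      case False
      then have ii: "i = length xs" using i by simp
      then have "(i + 1) mod length ?vs = 0" by simp
      moreover have "?vs ! i = v" using ii lastv xsne by (simp add: last_conv_nth)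
      ultimately show ?thesis using S e by (auto simp: insert_commute)
    qed
  qed
  then have "\<exists>vs. is_cycle E vs" by (rule exI)
  then show False using acyc by simp
qed


lemma comps_insert_card:
  assumes S: "S \<subseteq> E" and uV: "u \<in> V" and vV: "v \<in> V" and nc: "v \<notin> comp S u"
  shows "card (comps V (insert {u,v} S)) + 1 = card (comps V S)"
proof -
  let ?Cu = "comp S u" and ?Cv = "comp S v"
  let ?U = "?Cu \<union> ?Cv"
  have eq: "comps V (insert {u,v} S) = insert ?U (comps V S - {?Cu, ?Cv})"
  proof
    show "comps V (insert {u,v} S) \<subseteq> insert ?U (comps V S - {?Cu, ?Cv})"
    proof
      fix C assume "C \<in> comps V (insert {u,v} S)"
      then obtain x where x: "x \<in> V" "C = comp (insert {u,v} S) x" by (auto simp: comps_def)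
      show "C \<in> insert ?U (comps V S - {?Cu, ?Cv})"
      proof (cases "x \<in> ?U")
        case True then show ?thesis using x comp_insert[of u v S x] by simp
      next
        case False
        then have "C = comp S x" using x comp_insert[of u v S x] by simp
        moreover have "comp S x \<noteq> ?Cu" "comp S x \<noteq> ?Cv" using False comp_self[of x S] by auto
        ultimately show ?thesis using x(1) by (auto simp: comps_def)
      qed
    qed
    show "insert ?U (comps V S - {?Cu, ?Cv}) \<subseteq> comps V (insert {u,v} S)"
    proof
      fix C assume C: "C \<in> insert ?U (comps V S - {?Cu, ?Cv})"
      show "C \<in> comps V (insert {u,v} S)"
      proof (cases "C = ?U")
        case True
        have "comp (insert {u,v} S) u = ?U" using comp_insert[of u v S u] comp_self[of u S] by simp
        then show ?thesis using True uV by (auto simp: comps_def)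
      next
        case False
        then obtain x where x: "x \<in> V" "C = comp S x" "C \<noteq> ?Cu" "C \<noteq> ?Cv" using C by (auto simp: comps_def)
        have "x \<notin> ?U"
        proof
          assume "x \<in> ?U"
          then have "x \<in> ?Cu \<or> x \<in> ?Cv" by simp
          then show False using comp_eq[of x S u] comp_eq[of x S v] x by auto
        qed
        then have "comp (insert {u,v} S) x = C" using comp_insert[of u v S x] x by simp
        then show ?thesis using x(1) by (auto simp: comps_def)
      qed
    qed
  qed
  have Cu: "?Cu \<in> comps V S" using uV by (simp add: comps_def)
  have Cv: "?Cv \<in> comps V S" using vV by (simp add: comps_def)
  have ne: "?Cu \<noteq> ?Cv" using nc comp_self[of v S] by auto
  have Unot: "?U \<notin> comps V S - {?Cu, ?Cv}"
  proof
    assume "?U \<in> comps V S - {?Cu, ?Cv}"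
    then obtain x where x: "x \<in> V" "?U = comp S x" "?U \<noteq> ?Cu" by (auto simp: comps_def)
    have "u \<in> comp S x" using x(2) comp_self[of u S] by auto
    then have "comp S u = comp S x" by (rule comp_eq)
    then have "v \<in> comp S u" using x(2) comp_self[of v S] by auto
    then show False using nc by simp
  qed
  have fin: "finite (comps V S)" by (rule comps_fin)
  have "card (comps V (insert {u,v} S)) = card (comps V S - {?Cu, ?Cv}) + 1"
    unfolding eq using Unot fin by simp
  also have "card (comps V S - {?Cu, ?Cv}) = card (comps V S) - 2"
    using Cu Cv ne fin by (simp add: card_Diff_subset)
  finally have c: "card (comps V (insert {u,v} S)) = card (comps V S) - 2 + 1" .
  have "card {?Cu, ?Cv} \<le> card (comps V S)" using Cu Cv fin by (intro card_mono) auto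
  then have "2 \<le> card (comps V S)" using ne by simp
  then show ?thesis using c by simp
qed

lemma comps_empty_card: "card (comps V {}) = card V"
proof -
  have "comp ({}::'a set set) = (\<lambda>x. {x})" by (rule ext) (simp add: comp_def adj_def)
  then have "comps V {} = (\<lambda>x. {x}) ` V" by (simp add: comps_def)
  then show ?thesis by (simp add: card_image)
qed

lemma card_comps: assumes SE: "S \<subseteq> E" shows "card (comps V S) + card S = card V"
proof -
  have "finite S" using SE finE finite_subset by blast
  then show ?thesis using SE
  proof (induction S rule: finite_induct)
    case empty then show ?case using comps_empty_card by simp
  next
    case (insert e S)
    have S: "S \<subseteq> E" and eE: "e \<in> E" using insert.prems by auto
    obtain u v where uv: "u \<in> V" "v \<in> V" "u \<noteq> v" "e = {u,v}" using edge[OF eE] by blast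
    have nc: "v \<notin> comp S u" by (rule no_cyc_conn[OF insert.prems insert.hyps(2) uv(4) uv(3)])
    have "card (comps V (insert e S)) + 1 = card (comps V S)"
      using comps_insert_card[OF S uv(1) uv(2) nc] uv(4) by simp
    moreover have "card (insert e S) = card S + 1" using insert.hyps by simp
    ultimately show ?case using insert.IH[OF S] by simp
  qed
qed

end



lemma count_image_mset_set: "finite X \<Longrightarrow> count (image_mset f (mset_set X)) x = card {y\<in>X. f y = x}"
proof (induction X rule: finite_induct)
  case empty then show ?case by simp
next
  case (insert a X)
  have "{y\<in>insert a X. f y = x} = (if f a = x then insert a {y\<in>X. f y = x} else {y\<in>X. f y = x})" by auto
  then show ?case using insert by auto
qed

context sg
begin

definition iso :: "'a set set \<Rightarrow> 'a set" where "iso S = {v\<in>V. \<forall>e\<in>S. v \<notin> e}"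

lemma comp_single_iff: assumes S: "S \<subseteq> E" and v: "v \<in> V" shows "comp S v = {v} \<longleftrightarrow> v \<in> iso S"
proof
  assume c: "comp S v = {v}"
  show "v \<in> iso S" unfolding iso_def
  proof (intro CollectI conjI ballI)
    show "v \<in> V" using v .
    fix e assume eS: "e \<in> S"
    show "v \<notin> e"
    proof
      assume "v \<in> e"
      have "e \<in> E" using eS S by auto
      then obtain a b where ab: "a \<noteq> b" "e = {a,b}" using edge by blast
      have "v = a \<or> v = b" using \<open>v \<in> e\<close> ab by auto
      then obtain w where w: "w \<noteq> v" "e = {v,w}"
      proof
        assume "v = a" then show ?thesis using that[of b] ab by auto
      next
        assume "v = b" then show ?thesis using that[of a] ab by (auto simp: insert_commute)
      qed
      then have "(v,w) \<in> adj S" using eS by (simp add: adj_def)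
      then have "w \<in> comp S v" by (simp add: comp_def)
      then show False using c w(1) by simp
    qed
  qed
next
  assume i: "v \<in> iso S"
  show "comp S v = {v}"
  proof
    show "comp S v \<subseteq> {v}"
    proof
      fix y assume "y \<in> comp S v"
      then have r: "(v,y) \<in> (adj S)\<^sup>*" by (simp add: comp_def)
      show "y \<in> {v}"
      proof (rule ccontr)
        assume "y \<notin> {v}"
        then have "v \<noteq> y" by simp
        with r obtain z where "(v,z) \<in> adj S" by (metis converse_rtranclE)
        then have "{v,z} \<in> S" by (simp add: adj_def)
        then show False using i by (auto simp: iso_def)
      qed
    qed
    show "{v} \<subseteq> comp S v" using comp_self[of v S] by simp
  qed
qed

lemma count_lam_1: assumes S: "S \<subseteq> E" shows "count (lam V S) 1 = card (iso S)"
proof -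
  have "count (lam V S) 1 = card {C\<in>comps V S. card C = 1}"
    unfolding lam_def by (rule count_image_mset_set[OF comps_fin])
  also have "{C\<in>comps V S. card C = 1} = (\<lambda>v. {v}) ` iso S"
  proof
    show "{C\<in>comps V S. card C = 1} \<subseteq> (\<lambda>v. {v}) ` iso S"
    proof
      fix C assume "C \<in> {C\<in>comps V S. card C = 1}"
      then obtain x where x: "x \<in> V" "C = comp S x" "card C = 1" by (auto simp: comps_def)
      then obtain y where "C = {y}" by (metis card_1_singletonE)
      then have "C = {x}" using x(2) comp_self[of x S] by auto
      then have "x \<in> iso S" using comp_single_iff[OF S x(1)] x(2) by simp
      then show "C \<in> (\<lambda>v. {v}) ` iso S" using \<open>C = {x}\<close> by simp
    qed
    show "(\<lambda>v. {v}) ` iso S \<subseteq> {C\<in>comps V S. card C = 1}"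
    proof
      fix C assume "C \<in> (\<lambda>v. {v}) ` iso S"
      then obtain v where v: "v \<in> iso S" "C = {v}" by auto
      then have vV: "v \<in> V" by (simp add: iso_def)
      then have "comp S v = {v}" using comp_single_iff[OF S] v(1) by simp
      then have "C \<in> comps V S" using vV v(2) unfolding comps_def by (metis image_eqI)
      then show "C \<in> {C\<in>comps V S. card C = 1}" using v(2) by simp
    qed
  qed
  also have "card ((\<lambda>v. {v}) ` iso S) = card (iso S)" by (simp add: card_image)
  finally show ?thesis .
qed

lemma deg_eq: assumes v: "v \<in> V" shows "degree E v = card {e\<in>E. v \<in> e}"
proof -
  have inj: "inj_on (\<lambda>u. {u,v}) {u. {u,v} \<in> E}"
  proof (rule inj_onI)
    fix x y assume x: "x \<in> {u. {u,v} \<in> E}" and y: "y \<in> {u. {u,v} \<in> E}" and e: "{x,v} = {y,v}"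
    show "x = y"
    proof (rule ccontr)
      assume "x \<noteq> y"
      then have "x = v" "v = y" using e by (auto simp: doubleton_eq_iff)
      then have "{v} \<in> E" using x by simp
      then obtain a b where "a \<noteq> b" "{v} = {a,b}" using edge by blast
      then show False by (auto simp: doubleton_eq_iff)
    qed
  qed
  have im: "(\<lambda>u. {u,v}) ` {u. {u,v} \<in> E} = {e\<in>E. v \<in> e}"
  proof
    show "(\<lambda>u. {u,v}) ` {u. {u,v} \<in> E} \<subseteq> {e\<in>E. v \<in> e}" by auto
    show "{e\<in>E. v \<in> e} \<subseteq> (\<lambda>u. {u,v}) ` {u. {u,v} \<in> E}"
    proof
      fix e assume e: "e \<in> {e\<in>E. v \<in> e}"
      then obtain a b where ab: "e = {a,b}" using edge by blast
      then have "v = a \<or> v = b" using e by auto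
      then obtain w where "e = {w,v}" using ab by (auto simp: insert_commute)
      then show "e \<in> (\<lambda>u. {u,v}) ` {u. {u,v} \<in> E}" using e by auto
    qed
  qed
  show ?thesis unfolding degree_def using card_image[OF inj] im by simp
qed

definition U :: "'a set \<Rightarrow> 'a set" where "U e = {w\<in>e. \<forall>e'\<in>E. w \<in> e' \<longrightarrow> e' = e}"

lemma e_sub: "e \<in> E \<Longrightarrow> e \<subseteq> V"
proof -
  assume "e \<in> E"
  then obtain u v where "u \<in> V" "v \<in> V" "e = {u,v}" using edge by blast
  then show ?thesis by simp
qed

lemma U_sub: "e \<in> E \<Longrightarrow> U e \<subseteq> V"
  using e_sub unfolding U_def by blast

lemma leaves_sum: "card (leaves V E) = (\<Sum>e\<in>E. card (U e))"
proof -
  have eq: "leaves V E = (\<Union>e\<in>E. U e)"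
  proof
    show "leaves V E \<subseteq> (\<Union>e\<in>E. U e)"
    proof
      fix v assume "v \<in> leaves V E"
      then have v1: "v \<in> V" "degree E v = 1" by (auto simp: leaves_def)
      then have "card {e\<in>E. v \<in> e} = 1" using deg_eq[OF v1(1)] by simp
      then obtain e where eqE: "{e\<in>E. v \<in> e} = {e}" by (rule card_1_singletonE)
      have "e \<in> {e\<in>E. v \<in> e}" using eqE by simp
      then have eE: "e \<in> E" and ve: "v \<in> e" by simp_all
      have "\<forall>e'\<in>E. v \<in> e' \<longrightarrow> e' = e"
      proof (intro ballI impI)
        fix e' assume "e' \<in> E" "v \<in> e'"
        then have "e' \<in> {e\<in>E. v \<in> e}" by simp
        then show "e' = e" using eqE by simp
      qed
      then have "v \<in> U e" using ve by (simp add: U_def)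
      then show "v \<in> (\<Union>e\<in>E. U e)" using eE by (rule UN_I[rotated])
    qed
    show "(\<Union>e\<in>E. U e) \<subseteq> leaves V E"
    proof
      fix v assume "v \<in> (\<Union>e\<in>E. U e)"
      then obtain e where e: "e \<in> E" "v \<in> U e" by blast
      then have vV: "v \<in> V" using U_sub[OF e(1)] by auto
      have ve: "v \<in> e" and uq: "\<forall>e'\<in>E. v \<in> e' \<longrightarrow> e' = e" using e(2) by (simp_all add: U_def)
      have "{e\<in>E. v \<in> e} = {e}"
      proof
        show "{e\<in>E. v \<in> e} \<subseteq> {e}" using uq by blast
        show "{e} \<subseteq> {e\<in>E. v \<in> e}" using e(1) ve by simp
      qed
      then have "card {e\<in>E. v \<in> e} = 1" by simp
      then show "v \<in> leaves V E" using vV deg_eq[OF vV] by (simp add: leaves_def)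
    qed
  qed
  have "card (\<Union>e\<in>E. U e) = (\<Sum>e\<in>E. card (U e))"
  proof (rule card_UN_disjoint)
    show "finite E" by (rule finE)
    show "\<forall>e\<in>E. finite (U e)" using U_sub finV by (meson finite_subset)
    show "\<forall>e\<in>E. \<forall>e'\<in>E. e \<noteq> e' \<longrightarrow> U e \<inter> U e' = {}" by (auto simp: U_def)
  qed
  then show ?thesis using eq by simp
qed

lemma iso_remove: assumes e: "e \<in> E" shows "card (iso (E - {e})) = card (iso E) + card (U e)"
proof -
  have "iso (E - {e}) = iso E \<union> U e"
  proof
    show "iso (E - {e}) \<subseteq> iso E \<union> U e"
    proof
      fix w assume w: "w \<in> iso (E - {e})"
      show "w \<in> iso E \<union> U e"
      proof (cases "w \<in> e")
        case True then show ?thesis using w by (auto simp: U_def iso_def)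
      next
        case False then show ?thesis using w by (auto simp: iso_def)
      qed
    qed
    show "iso E \<union> U e \<subseteq> iso (E - {e})" using U_sub[OF e] by (auto simp: U_def iso_def)
  qed
  moreover have "iso E \<inter> U e = {}" using e by (auto simp: U_def iso_def)
  moreover have "finite (iso E)" using finV by (simp add: iso_def)
  moreover have "finite (U e)" by (rule finite_subset[OF U_sub[OF e] finV])
  ultimately show ?thesis by (simp add: card_Un_disjoint)
qed

lemma sum_lam: assumes S: "S \<subseteq> E" shows "sum_mset (lam V S) = card V"
proof -
  have "sum_mset (lam V S) = (\<Sum>C\<in>comps V S. card C)"
    unfolding lam_def using comps_fin by (simp add: sum_unfold_sum_mset)
  also have "\<dots> = card (\<Union>(comps V S))"
  proof (rule card_Union_disjoint[symmetric])
    show "pairwise disjnt (comps V S)" unfolding pairwise_def disjnt_def using comps_disj by auto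
    show "\<And>A. A \<in> comps V S \<Longrightarrow> finite A" using comps_fin_mem[OF S] by auto
  qed
  also have "\<dots> = card V" using comps_union[OF S] by simp
  finally show ?thesis .
qed

end



context sg
begin

definition cnt :: "nat multiset \<Rightarrow> nat" where "cnt l = card {S\<in>Pow E. lam V S = l}"

definition T :: "nat \<Rightarrow> nat" where
  "T k = (\<Sum>S\<in>{S\<in>Pow E. size (lam V S) = k}. count (lam V S) 1)"

lemma T_cnt: "T k = (\<Sum>l\<in>{l\<in>Lams. size l = k}. cnt l * count l 1)"
proof -
  let ?X = "{S\<in>Pow E. size (lam V S) = k}"
  have fX: "finite ?X" using finE by simp
  have "T k = (\<Sum>l\<in>lam V ` ?X. \<Sum>S\<in>{S\<in>?X. lam V S = l}. count (lam V S) 1)"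
    unfolding T_def by (rule sum.image_gen[OF fX])
  also have "lam V ` ?X = {l\<in>Lams. size l = k}" by (auto simp: Lams_def)
  also have "(\<Sum>l\<in>{l\<in>Lams. size l = k}. \<Sum>S\<in>{S\<in>?X. lam V S = l}. count (lam V S) 1)
      = (\<Sum>l\<in>{l\<in>Lams. size l = k}. cnt l * count l 1)"
  proof (rule sum.cong[OF refl])
    fix l assume l: "l \<in> {l\<in>Lams. size l = k}"
    have eq: "{S\<in>?X. lam V S = l} = {S\<in>Pow E. lam V S = l}" using l by auto
    have "(\<Sum>S\<in>{S\<in>?X. lam V S = l}. count (lam V S) 1) = (\<Sum>S\<in>{S\<in>Pow E. lam V S = l}. count l 1)"
      unfolding eq by (rule sum.cong) auto
    then show "(\<Sum>S\<in>{S\<in>?X. lam V S = l}. count (lam V S) 1) = cnt l * count l 1"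
      by (simp add: cnt_def)
  qed
  finally show ?thesis .
qed

lemma Lams_cnt: "l \<in> Lams \<longleftrightarrow> cnt l > 0"
proof -
  have "finite {S\<in>Pow E. lam V S = l}" using finE by simp
  then show ?thesis by (auto simp: Lams_def cnt_def card_gt_0_iff)
qed

end

context forestl
begin

lemma size_lam: "S \<subseteq> E \<Longrightarrow> size (lam V S) = card V - card S"
  using card_comps[of S] by (simp add: lam_def comps_fin)

lemma m_le_n: "card E \<le> card V" using card_comps[of E] by simp

lemma cardS_le: "S \<subseteq> E \<Longrightarrow> card S \<le> card E" using finE by (simp add: card_mono)

lemma cnt_cc: "cnt l = nat \<bar>cc l\<bar>"
proof -
  let ?X = "{S\<in>Pow E. lam V S = l}"
  have "cc l = (\<Sum>S\<in>?X. (-1::int)^(card V - size l))"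
    unfolding cc_def
  proof (rule sum.cong[OF refl])
    fix S assume "S \<in> ?X"
    then have S: "S \<subseteq> E" "lam V S = l" by auto
    have "card S \<le> card V" using cardS_le[OF S(1)] m_le_n by simp
    then have "card S = card V - size l" using size_lam[OF S(1)] S(2) by simp
    then show "(-1::int)^card S = (-1)^(card V - size l)" by simp
  qed
  also have "\<dots> = int (card ?X) * (-1)^(card V - size l)" by simp
  finally have "\<bar>cc l\<bar> = int (card ?X)" by (simp add: abs_mult power_abs)
  then show ?thesis by (simp add: cnt_def)
qed

lemma Min_Lams: "Min (size ` Lams) = card V - card E"
proof (rule Min_eqI)
  show "finite (size ` Lams)" using Lams_fin by simp
  show "\<And>y. y \<in> size ` Lams \<Longrightarrow> card V - card E \<le> y"
  proof -
    fix y assume "y \<in> size ` Lams"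
    then obtain S where S: "S \<subseteq> E" "y = size (lam V S)" by (auto simp: Lams_def)
    then show "card V - card E \<le> y" using size_lam[OF S(1)] cardS_le[OF S(1)] by simp
  qed
  have "lam V E \<in> Lams" by (simp add: Lams_def)
  then show "card V - card E \<in> size ` Lams"
    using size_lam[of E] by (metis image_eqI order_refl)
qed

lemma leaves_T:
  assumes m1: "card E \<ge> 1"
  shows "int (card (leaves V E)) = int (T (card V - card E + 1)) - int (card E) * int (T (card V - card E))"
proof -
  let ?n = "card V" and ?m = "card E"
  have mn: "?m \<le> ?n" by (rule m_le_n)
  have X0: "{S\<in>Pow E. size (lam V S) = ?n - ?m} = {E}"
  proof
    show "{S\<in>Pow E. size (lam V S) = ?n - ?m} \<subseteq> {E}"
    proof
      fix S assume "S \<in> {S\<in>Pow E. size (lam V S) = ?n - ?m}"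
      then have S: "S \<subseteq> E" "size (lam V S) = ?n - ?m" by auto
      then have "card S = ?m" using size_lam[OF S(1)] cardS_le[OF S(1)] mn by simp
      then have "S = E" using card_subset_eq[OF finE S(1)] by simp
      then show "S \<in> {E}" by simp
    qed
    show "{E} \<subseteq> {S\<in>Pow E. size (lam V S) = ?n - ?m}" using size_lam[of E] by simp
  qed
  have T0: "T (?n - ?m) = card (iso E)"
    unfolding T_def X0 using count_lam_1[of E] by simp
  have X1: "{S\<in>Pow E. size (lam V S) = ?n - ?m + 1} = (\<lambda>e. E - {e}) ` E"
  proof
    show "{S\<in>Pow E. size (lam V S) = ?n - ?m + 1} \<subseteq> (\<lambda>e. E - {e}) ` E"
    proof
      fix S assume "S \<in> {S\<in>Pow E. size (lam V S) = ?n - ?m + 1}"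
      then have S: "S \<subseteq> E" "size (lam V S) = ?n - ?m + 1" by auto
      then have cS: "card S + 1 = ?m" using size_lam[OF S(1)] cardS_le[OF S(1)] mn m1 by simp
      have "card (E - S) = 1" using card_Diff_subset[OF finite_subset[OF S(1) finE] S(1)] cS by simp
      then obtain e where e: "E - S = {e}" by (rule card_1_singletonE)
      then have "e \<in> E" "S = E - {e}" using S(1) by auto
      then show "S \<in> (\<lambda>e. E - {e}) ` E" by blast
    qed
    show "(\<lambda>e. E - {e}) ` E \<subseteq> {S\<in>Pow E. size (lam V S) = ?n - ?m + 1}"
    proof
      fix S assume "S \<in> (\<lambda>e. E - {e}) ` E"
      then obtain e where e: "e \<in> E" "S = E - {e}" by auto
      have "card S = ?m - 1" using e finE by simp
      moreover have "S \<subseteq> E" using e by auto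
      ultimately show "S \<in> {S\<in>Pow E. size (lam V S) = ?n - ?m + 1}"
        using size_lam[of S] mn m1 by simp
    qed
  qed
  have inj: "inj_on (\<lambda>e. E - {e}) E" by (auto simp: inj_on_def)
  have "T (?n - ?m + 1) = (\<Sum>e\<in>E. count (lam V (E - {e})) 1)"
    unfolding T_def X1 using inj by (simp add: sum.reindex)
  also have "\<dots> = (\<Sum>e\<in>E. card (iso E) + card (U e))"
  proof (rule sum.cong[OF refl])
    fix e assume "e \<in> E"
    then show "count (lam V (E - {e})) 1 = card (iso E) + card (U e)"
      using count_lam_1[of "E - {e}"] iso_remove by auto
  qed
  also have "\<dots> = ?m * card (iso E) + card (leaves V E)"
    by (simp add: sum.distrib leaves_sum)
  finally show ?thesis using T0 by simp
qed

end



theorem mainTheorem6: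
  fixes V1 :: "'a set" and E1 :: "'a set set"
    and V2 :: "'b set" and E2 :: "'b set set"
  assumes "forest V1 E1" and "forest V2 E2"
    and "csf V1 E1 = csf V2 E2"
  shows "card (leaves V1 E1) = card (leaves V2 E2)"
proof -
  interpret f1: forestl V1 E1 using assms(1) by unfold_locales (auto simp: forest_def)
  interpret f2: forestl V2 E2 using assms(2) by unfold_locales (auto simp: forest_def)
  have s1: "sg V1 E1" and s2: "sg V2 E2" by unfold_locales
  have cceq: "f1.cc l = f2.cc l" for l by (rule cc_eq[OF s1 s2 assms(3)])
  have cnteq: "f1.cnt l = f2.cnt l" for l using cceq[of l] f1.cnt_cc f2.cnt_cc by simp
  have Lamseq: "f1.Lams = f2.Lams" using cnteq f1.Lams_cnt f2.Lams_cnt by auto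
  have neq: "card V1 = card V2"
  proof -
    have "lam V1 {} \<in> f1.Lams" unfolding f1.Lams_def by blast
    then have "lam V1 {} \<in> f2.Lams" using Lamseq by simp
    then obtain S2 where S2: "S2 \<subseteq> E2" "lam V2 S2 = lam V1 {}" by (auto simp: f2.Lams_def)
    then show ?thesis using f1.sum_lam[of "{}"] f2.sum_lam[OF S2(1)] by simp
  qed
  have meq: "card E1 = card E2"
    using f1.Min_Lams f2.Min_Lams Lamseq neq f1.m_le_n f2.m_le_n by simp
  have Teq: "f1.T k = f2.T k" for k using f1.T_cnt f2.T_cnt Lamseq cnteq by simp
  show ?thesis
  proof (cases "card E1 = 0")
    case True
    then have "E1 = {}" "E2 = {}" using f1.finE f2.finE meq by auto
    then show ?thesis using f1.leaves_sum f2.leaves_sum by simp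
  next
    case False
    then have "card E1 \<ge> 1" "card E2 \<ge> 1" using meq by auto
    then have "int (card (leaves V1 E1)) = int (card (leaves V2 E2))"
      using f1.leaves_T f2.leaves_T neq meq Teq by simp
    then show ?thesis by simp
  qed
qed


end
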